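(* Let $\gamma\in[0,1)$ and $\Omega_{\gamma}=\{z\in\mathbb{C}:|z+\frac{\gamma}{1-\gamma}|<\frac{1}{1-\gamma}\}$. Suppose that $h(z)=\sum_{n=0}^\infty a_n\left(z+\frac{\gamma}{1-\gamma}\right)^n$ and $g(z)=\sum_{n=0}^\infty b_n\left(z+\frac{\gamma}{1-\gamma}\right)^n$ are analytic in $\Omega_{\gamma}$, that $|h(z)|\le 1$ in $\Omega_\gamma$, and that $|g'(z)|\le k|h'(z)|$ in $\Omega_{\gamma}$ for some $k\in[0,1)$. Then for $|(1-\gamma)z+\gamma|=\rho<1$, $$\sum_{n=1}^\infty n\frac{|b_n|^2}{(1-\gamma)^{2n}}\rho^{2n}\le k^2\sum_{n=1}^\infty n\frac{|a_n|^2}{(1-\gamma)^{2n}}\rho^{2n}\quad\text{and}\quad \sum_{n=1}^\infty \frac{|b_n|^2}{(1-\gamma)^{2n}}\rho^{n}\le k^2\sum_{n=1}^\infty \frac{|a_n|^2}{(1-\gamma)^{2n}}\rho^{n}.$$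
   Context: $\Omega_\gamma$ is the open disk centered at $-\gamma/(1-\gamma)$ of radius $1/(1-\gamma)$; it contains the unit disk $\mathbb{D}$. *)

theory Defs
  imports "HOL-Complex_Analysis.Complex_Analysis"
begin

definition Omega :: "real \<Rightarrow> complex set" where
  "Omega \<gamma> = ball (- complex_of_real (\<gamma> / (1 - \<gamma>))) (1 / (1 - \<gamma>))"

end

theory Submission
  imports Defs
begin
lemma cis_int_integral:
  fixes j :: int
  shows "((\<lambda>t. cis (of_int j * t)) has_integral (if j = 0 then complex_of_real (2*pi) else 0)) {0..2*pi}"
proof (cases "j = 0")
  case True
  then show ?thesis using has_integral_const_real[of "1::complex" 0 "2*pi"]
    by (simp add: scaleR_conv_of_real)
next
  case False
  define f where "f t = exp (\<i> * of_real (of_int j * t)) / (\<i> * of_int j)" for t :: real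
  have d: "(f has_vector_derivative cis (of_int j * t)) (at t within {0..2*pi})" for t
  proof -
    define g where "g z = exp (\<i> * of_int j * z) / (\<i> * of_int j)" for z :: complex
    have "(g has_field_derivative exp (\<i> * of_int j * of_real t) * (\<i> * of_int j) / (\<i> * of_int j)) (at (of_real t))"
      unfolding g_def by (auto intro!: derivative_eq_intros)
    then have "((\<lambda>x. g (of_real x)) has_vector_derivative exp (\<i> * of_int j * of_real t) * (\<i> * of_int j) / (\<i> * of_int j)) (at t within {0..2*pi})"
      by (rule has_vector_derivative_real_field)
    moreover have "(\<lambda>x. g (of_real x)) = f" by (auto simp: f_def g_def fun_eq_iff mult_ac)
    ultimately show ?thesis using False by (simp add: cis_conv_exp mult_ac)
  qed
  have "((\<lambda>t. cis (of_int j * t)) has_integral (f (2*pi) - f 0)) {0..2*pi}"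
    by (rule fundamental_theorem_of_calculus) (use d in auto)
  moreover have "f (2*pi) = f 0"
  proof -
    have "exp (\<i> * of_real (of_int j * (2*pi))) = cis (2 * pi * of_int j)"
      by (simp add: cis_conv_exp mult_ac)
    also have "\<dots> = 1" by (simp)
    finally show ?thesis by (simp add: f_def)
  qed
  ultimately show ?thesis using False by simp
qed

lemma parseval_finite:
  fixes c :: "nat \<Rightarrow> complex" and s :: real
  shows "((\<lambda>t. (norm (\<Sum>n<N. c n * (of_real s * cis t)^n))^2) has_integral
           (2*pi * (\<Sum>n<N. (norm (c n))^2 * s^(2*n)))) {0..2*pi}"
proof -
  define K where "K n m = c n * cnj (c m) * of_real (s^(n+m))" for n m
  have pw: "(of_real s * cis t)^n = of_real (s^n) * cis (real n * t)" for t :: real and n :: nat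
    by (simp only: power_mult_distrib Complex.DeMoivre of_real_power)
  have eq: "complex_of_real ((norm (\<Sum>n<N. c n * (of_real s * cis t)^n))^2) =
     (\<Sum>n<N. \<Sum>m<N. K n m * cis (of_int (int n - int m) * t))" for t
  proof -
    have "complex_of_real ((norm (\<Sum>n<N. c n * (of_real s * cis t)^n))^2) =
       (\<Sum>n<N. c n * (of_real (s^n) * cis (real n * t))) * cnj (\<Sum>m<N. c m * (of_real (s^m) * cis (real m * t)))"
      by (simp only: complex_norm_square pw)
    also have "\<dots> = (\<Sum>n<N. c n * (of_real (s^n) * cis (real n * t))) * (\<Sum>m<N. cnj (c m) * (of_real (s^m) * cis (- (real m * t))))"
      by (simp add: cnj_sum cis_cnj)
    also have "\<dots> = (\<Sum>n<N. \<Sum>m<N. (c n * (of_real (s^n) * cis (real n * t))) * (cnj (c m) * (of_real (s^m) * cis (- (real m * t)))))"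
      by (rule sum_product)
    also have "\<dots> = (\<Sum>n<N. \<Sum>m<N. K n m * cis (of_int (int n - int m) * t))"
    proof (intro sum.cong refl)
      fix n m
      have "cis (real n * t) * cis (- (real m * t)) = cis (of_int (int n - int m) * t)"
        by (simp add: cis_mult algebra_simps)
      then show "(c n * (of_real (s^n) * cis (real n * t))) * (cnj (c m) * (of_real (s^m) * cis (- (real m * t)))) = K n m * cis (of_int (int n - int m) * t)"
        unfolding K_def by (simp add: power_add mult_ac)
    qed
    finally show ?thesis .
  qed
  have each: "((\<lambda>t. K n m * cis (of_int (int n - int m) * t)) has_integral
               (K n m * (if n = m then complex_of_real (2*pi) else 0))) {0..2*pi}" for n m
    using has_integral_mult_right[OF cis_int_integral[of "int n - int m"], of "K n m"]
    by (cases "n = m") simp_all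
  have "((\<lambda>t. \<Sum>n<N. \<Sum>m<N. K n m * cis (of_int (int n - int m) * t)) has_integral
          (\<Sum>n<N. \<Sum>m<N. K n m * (if n = m then complex_of_real (2*pi) else 0))) {0..2*pi}"
    by (intro has_integral_sum finite_lessThan ballI each)
  also have "(\<Sum>n<N. \<Sum>m<N. K n m * (if n = m then complex_of_real (2*pi) else 0)) =
             (\<Sum>n<N. K n n * complex_of_real (2*pi))"
  proof (intro sum.cong refl)
    fix n assume "n \<in> {..<N}"
    have "(\<lambda>m. K n m * (if n = m then complex_of_real (2*pi) else 0)) =
          (\<lambda>m. if n = m then K n m * complex_of_real (2*pi) else 0)" by auto
    then show "(\<Sum>m<N. K n m * (if n = m then complex_of_real (2*pi) else 0)) = K n n * complex_of_real (2*pi)"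
      using \<open>n \<in> {..<N}\<close> sum.delta'[of "{..<N}" n "\<lambda>m. K n m * complex_of_real (2*pi)"]
      by (simp only: finite_lessThan if_True)
  qed
  also have "\<dots> = complex_of_real (2*pi * (\<Sum>n<N. (norm (c n))^2 * s^(2*n)))"
  proof -
    have "K n n * complex_of_real (2*pi) = complex_of_real (2*pi * ((norm (c n))^2 * s^(2*n)))" for n
    proof -
      have "s^(n+n) = s^(2*n)" by (simp add: mult_2)
      then show ?thesis unfolding K_def of_real_mult complex_norm_square[symmetric]
        by (simp only: ac_simps)
    qed
    then show ?thesis by (simp add: sum_distrib_left mult.commute)
  qed
  finally have "((\<lambda>t. complex_of_real ((norm (\<Sum>n<N. c n * (of_real s * cis t)^n))^2)) has_integral
          complex_of_real (2*pi * (\<Sum>n<N. (norm (c n))^2 * s^(2*n)))) {0..2*pi}"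
    by (simp only: eq)
  from has_integral_Re[OF this] show ?thesis by simp
qed

lemma parseval:
  fixes c :: "nat \<Rightarrow> complex" and s :: real
  assumes sm: "summable (\<lambda>n. norm (c n) * s^n)" and s: "0 \<le> s"
  shows "(\<lambda>n. (norm (c n))^2 * s^(2*n)) sums
           (integral {0..2*pi} (\<lambda>t. (norm (\<Sum>n. c n * (of_real s * cis t)^n))^2) / (2*pi))"
    and "(\<lambda>t. (norm (\<Sum>n. c n * (of_real s * cis t)^n))^2) integrable_on {0..2*pi}"
proof -
  define P where "P N t = (\<Sum>n<N. c n * (of_real s * cis t)^n)" for N t
  define F where "F t = (\<Sum>n. c n * (of_real s * cis t)^n)" for t
  have nrm: "norm (c n * (of_real s * cis t)^n) = norm (c n) * s^n" for n t
    using s by (simp add: norm_mult norm_power)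
  have u: "uniform_limit {0..2*pi} P F sequentially"
    unfolding P_def F_def
    by (rule Weierstrass_m_test[OF _ sm]) (simp add: nrm)
  have un: "uniform_limit {0..2*pi} (\<lambda>N t. norm (P N t)) (\<lambda>t. norm (F t)) sequentially"
    by (rule uniform_limit_norm[OF u])
  have bF: "norm (F t) \<le> (\<Sum>n. norm (c n) * s^n)" for t
    unfolding F_def by (rule norm_suminf_le[OF _ sm]) (simp add: nrm)
  have bd: "bounded ((\<lambda>t. norm (F t)) ` {0..2*pi})"
    unfolding bounded_iff using bF by auto
  have u2: "uniform_limit {0..2*pi} (\<lambda>N t. norm (P N t) * norm (P N t)) (\<lambda>t. norm (F t) * norm (F t)) sequentially"
    by (rule uniform_lim_mult[OF un un bd bd])
  have cont: "continuous_on {0..2*pi} (\<lambda>t. norm (P N t) * norm (P N t))" for N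
    unfolding P_def by (intro continuous_intros)
  obtain I J where I: "\<And>N. ((\<lambda>t. norm (P N t) * norm (P N t)) has_integral I N) {0..2*pi}"
    and J: "((\<lambda>t. norm (F t) * norm (F t)) has_integral J) {0..2*pi}"
    and IJ: "I \<longlonglongrightarrow> J"
    using uniform_limit_integral[OF u2 cont] by auto
  have IN: "I N = 2*pi * (\<Sum>n<N. (norm (c n))^2 * s^(2*n))" for N
    using has_integral_unique[OF I[of N] parseval_finite[where N=N and c=c and s=s, folded P_def, unfolded power2_eq_square]]
    by (simp add: power2_eq_square)
  have "(\<lambda>N. I N / (2*pi)) \<longlonglongrightarrow> J / (2*pi)"
    by (intro tendsto_divide IJ tendsto_const) simp
  then have "(\<lambda>n. (norm (c n))^2 * s^(2*n)) sums (J / (2*pi))"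
    unfolding sums_def IN by simp
  moreover have "J = integral {0..2*pi} (\<lambda>t. (norm (\<Sum>n. c n * (of_real s * cis t)^n))^2)"
    using J unfolding F_def by (simp add: power2_eq_square integral_unique)
  ultimately show "(\<lambda>n. (norm (c n))^2 * s^(2*n)) sums
           (integral {0..2*pi} (\<lambda>t. (norm (\<Sum>n. c n * (of_real s * cis t)^n))^2) / (2*pi))"
    by simp
  show "(\<lambda>t. (norm (\<Sum>n. c n * (of_real s * cis t)^n))^2) integrable_on {0..2*pi}"
    using J unfolding F_def by (auto simp: power2_eq_square)
qed

lemma sm_all:
  fixes c :: "nat \<Rightarrow> real"
  assumes "\<And>x. 0 \<le> x \<Longrightarrow> x < M \<Longrightarrow> summable (\<lambda>n. c n * x^n)" "\<bar>z\<bar> < M"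
  shows "summable (\<lambda>n. c n * z^n)"
proof -
  define x where "x = (\<bar>z\<bar> + M) / 2"
  have "summable (\<lambda>n. c n * x^n)" using assms by (intro assms(1)) (auto simp: x_def)
  moreover have "norm z < norm x" using assms by (auto simp: x_def)
  ultimately show ?thesis by (rule summable_norm_cancel[OF powser_insidea])
qed

lemma sm_n:
  fixes d :: "nat \<Rightarrow> real"
  assumes "\<And>x. \<bar>x\<bar> < M \<Longrightarrow> summable (\<lambda>n. d n * x^n)" "\<bar>x\<bar> < M"
  shows "summable (\<lambda>n. (of_nat n * d n) * x^n)"
proof -
  have "summable (\<lambda>n. diffs d n * x^n)"
    by (rule termdiff_converges[of x M]) (use assms in auto)
  then have "summable (\<lambda>n. diffs d n * x^n * x)" by (rule summable_mult2)
  then have "summable (\<lambda>n. (of_nat (Suc n) * d (Suc n)) * x^(Suc n))"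
    by (simp add: diffs_def mult_ac)
  then show ?thesis by (subst summable_Suc_iff[symmetric])
qed

lemma pos_int:
  fixes c :: "nat \<Rightarrow> real"
  assumes sm: "\<And>x. 0 \<le> x \<Longrightarrow> x < M \<Longrightarrow> summable (\<lambda>n. c n * x^n)"
    and d: "\<And>x. 0 \<le> x \<Longrightarrow> x < M \<Longrightarrow> 0 \<le> (\<Sum>n. diffs c n * x^n)"
    and x: "0 \<le> x" "x < M"
  shows "c 0 \<le> (\<Sum>n. c n * x^n)"
proof -
  define f where "f y = (\<Sum>n. c n * y^n)" for y :: real
  have D: "(f has_field_derivative (\<Sum>n. diffs c n * y^n)) (at y)" if "\<bar>y\<bar> < M" for y
    unfolding f_def by (rule termdiffs_strong'[of M]) (use sm_all[OF sm] that in auto)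
  have "f 0 \<le> f x"
  proof (rule DERIV_nonneg_imp_increasing_open[OF x(1)])
    fix y assume "0 < y" "y < x"
    then show "\<exists>z. (f has_real_derivative z) (at y) \<and> 0 \<le> z"
      using D[of y] d[of y] x by auto
  next
    show "continuous_on {0..x} f"
      using D x by (intro continuous_at_imp_continuous_on ballI DERIV_isCont[OF D]) auto
  qed
  then show ?thesis by (simp add: f_def)
qed

lemma fin_ineq:
  fixes p q :: "nat \<Rightarrow> real"
  assumes "summable p" "summable q" "0 \<le> (\<Sum>n. K * p n - q n)"
  shows "(\<Sum>n. q n) \<le> K * (\<Sum>n. p n)"
proof -
  have "(\<Sum>n. K * p n - q n) = K * (\<Sum>n. p n) - (\<Sum>n. q n)"
  proof -
    have "(\<Sum>n. K * p n - q n) = (\<Sum>n. K * p n) - (\<Sum>n. q n)"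
      by (rule suminf_diff[symmetric]) (use assms summable_mult in auto)
    also have "(\<Sum>n. K * p n) = K * (\<Sum>n. p n)" by (rule suminf_mult[OF assms(1)])
    finally show ?thesis .
  qed
  then show ?thesis using assms by simp
qed

theorem lemma2p3:
  fixes \<gamma> k \<rho> :: real and h g :: "complex \<Rightarrow> complex" and a b :: "nat \<Rightarrow> complex"
  assumes "0 \<le> \<gamma>" "\<gamma> < 1"
    and "0 \<le> k" "k < 1"
    and "h holomorphic_on Omega \<gamma>" "g holomorphic_on Omega \<gamma>"
    and "\<And>z. z \<in> Omega \<gamma> \<Longrightarrow> (\<lambda>n. a n * (z + of_real (\<gamma> / (1 - \<gamma>))) ^ n) sums h z"
    and "\<And>z. z \<in> Omega \<gamma> \<Longrightarrow> (\<lambda>n. b n * (z + of_real (\<gamma> / (1 - \<gamma>))) ^ n) sums g z"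
    and "\<And>z. z \<in> Omega \<gamma> \<Longrightarrow> norm (h z) \<le> 1"
    and "\<And>z. z \<in> Omega \<gamma> \<Longrightarrow> norm (deriv g z) \<le> k * norm (deriv h z)"
    and "0 \<le> \<rho>" "\<rho> < 1"
  shows "summable (\<lambda>n. real (Suc n) * norm (b (Suc n))^2 / (1 - \<gamma>)^(2 * Suc n) * \<rho>^(2 * Suc n))
       \<and> summable (\<lambda>n. real (Suc n) * norm (a (Suc n))^2 / (1 - \<gamma>)^(2 * Suc n) * \<rho>^(2 * Suc n))
       \<and> (\<Sum>n. real (Suc n) * norm (b (Suc n))^2 / (1 - \<gamma>)^(2 * Suc n) * \<rho>^(2 * Suc n))
           \<le> k^2 * (\<Sum>n. real (Suc n) * norm (a (Suc n))^2 / (1 - \<gamma>)^(2 * Suc n) * \<rho>^(2 * Suc n))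
       \<and> summable (\<lambda>n. norm (b (Suc n))^2 / (1 - \<gamma>)^(2 * Suc n) * \<rho>^(Suc n))
       \<and> summable (\<lambda>n. norm (a (Suc n))^2 / (1 - \<gamma>)^(2 * Suc n) * \<rho>^(Suc n))
       \<and> (\<Sum>n. norm (b (Suc n))^2 / (1 - \<gamma>)^(2 * Suc n) * \<rho>^(Suc n))
           \<le> k^2 * (\<Sum>n. norm (a (Suc n))^2 / (1 - \<gamma>)^(2 * Suc n) * \<rho>^(Suc n))"
proof -
  define C where "C = \<gamma> / (1 - \<gamma>)"
  define R where "R = 1 / (1 - \<gamma>)"
  have R0: "R > 0" using assms(2) by (simp add: R_def)
  have inO: "w - of_real C \<in> Omega \<gamma>" if "norm w < R" for w
    using that unfolding Omega_def C_def R_def by (simp add: dist_norm)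
  have opO: "open (Omega \<gamma>)" by (simp add: Omega_def)
  have sa: "(\<lambda>n. a n * w^n) sums h (w - of_real C)" if "norm w < R" for w
    using assms(7)[OF inO[OF that]] by (simp add: C_def)
  have sb: "(\<lambda>n. b n * w^n) sums g (w - of_real C)" if "norm w < R" for w
    using assms(8)[OF inO[OF that]] by (simp add: C_def)
  have dgen: "(\<lambda>n. diffs c n * w^n) sums deriv f (w - of_real C)"
    if hol: "f holomorphic_on Omega \<gamma>" and sc: "\<And>w. norm w < R \<Longrightarrow> (\<lambda>n. c n * w^n) sums f (w - of_real C)"
      and w: "norm w < R" for f c w
  proof -
    have "(f has_field_derivative deriv f (w - of_real C)) (at (w - of_real C))"
      using holomorphic_derivI[OF hol opO inO[OF w]] .
    then have "((\<lambda>w. f (w - of_real C)) has_field_derivative deriv f (w - of_real C) * 1) (at w)"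
      by (rule DERIV_chain2) (auto intro!: derivative_eq_intros)
    then show ?thesis
      using termdiffs_sums_strong[where K=R, OF sc _ w] by simp
  qed
  have da: "(\<lambda>n. diffs a n * w^n) sums deriv h (w - of_real C)" if "norm w < R" for w
    by (rule dgen[OF assms(5) sa that])
  have db: "(\<lambda>n. diffs b n * w^n) sums deriv g (w - of_real C)" if "norm w < R" for w
    by (rule dgen[OF assms(6) sb that])
  have par: "(\<lambda>n. (norm (c n))^2 * s^(2*n)) sums
               (integral {0..2*pi} (\<lambda>t. (norm (D (of_real s * cis t - of_real C)))^2) / (2*pi))
            \<and> (\<lambda>t. (norm (D (of_real s * cis t - of_real C)))^2) integrable_on {0..2*pi}"
    if sc: "\<And>w. norm w < R \<Longrightarrow> (\<lambda>n. c n * w^n) sums D (w - of_real C)" and s: "0 \<le> s" "s < R"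
    for c D s
  proof -
    define t where "t = (s + R) / 2"
    have "summable (\<lambda>n. c n * of_real t ^ n)"
    proof -
      have "norm (of_real t :: complex) < R" using s R0 by (simp add: t_def del: of_real_add of_real_divide)
      from sums_summable[OF sc[OF this]] show ?thesis .
    qed
    then have "summable (\<lambda>n. norm (c n * of_real s ^ n))"
    proof (rule powser_insidea)
      show "norm (of_real s :: complex) < norm (of_real t :: complex)"
        using s R0 by (simp add: t_def del: of_real_add of_real_divide)
    qed
    then have sm: "summable (\<lambda>n. norm (c n) * s ^ n)"
      using s by (simp add: norm_mult norm_power)
    have eq: "(\<Sum>n. c n * (of_real s * cis t)^n) = D (of_real s * cis t - of_real C)" for t
      using sc[of "of_real s * cis t"] s by (simp add: sums_iff norm_mult)
    show ?thesis using parseval[OF sm s(1)] by (simp add: eq)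
  qed
  have ineq: "summable (\<lambda>n. (norm (diffs b n))^2 * s^(2*n)) \<and> summable (\<lambda>n. (norm (diffs a n))^2 * s^(2*n))
      \<and> (\<Sum>n. (norm (diffs b n))^2 * s^(2*n)) \<le> k^2 * (\<Sum>n. (norm (diffs a n))^2 * s^(2*n))"
    if s: "0 \<le> s" "s < R" for s
  proof -
    define Ga where "Ga t = (norm (deriv h (of_real s * cis t - of_real C)))^2" for t
    define Gb where "Gb t = (norm (deriv g (of_real s * cis t - of_real C)))^2" for t
    have pa: "(\<lambda>n. (norm (diffs a n))^2 * s^(2*n)) sums (integral {0..2*pi} Ga / (2*pi))"
      and ia: "Ga integrable_on {0..2*pi}"
      using par[OF da s] unfolding Ga_def by auto
    have pb: "(\<lambda>n. (norm (diffs b n))^2 * s^(2*n)) sums (integral {0..2*pi} Gb / (2*pi))"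
      and ib: "Gb integrable_on {0..2*pi}"
      using par[OF db s] unfolding Gb_def by auto
    have pt: "Gb t \<le> k^2 * Ga t" for t
    proof -
      have "norm (of_real s * cis t) < R" using s by (simp add: norm_mult)
      from inO[OF this] have z: "of_real s * cis t - of_real C \<in> Omega \<gamma>" .
      have "Gb t \<le> (k * norm (deriv h (of_real s * cis t - of_real C)))^2"
        unfolding Gb_def by (rule power_mono[OF assms(10)[OF z]]) simp
      then show ?thesis by (simp add: Ga_def power_mult_distrib)
    qed
    have "integral {0..2*pi} Gb \<le> integral {0..2*pi} (\<lambda>t. k^2 * Ga t)"
      by (rule integral_le[OF ib _ pt]) (use integrable_on_cmult_left[OF ia, where c="k^2"] in simp)
    also have "\<dots> = k^2 * integral {0..2*pi} Ga"
      using integral_cmul[where c="k^2" and f=Ga and S="{0..2*pi}"] by simp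
    finally have "integral {0..2*pi} Gb / (2*pi) \<le> k^2 * (integral {0..2*pi} Ga / (2*pi))"
      by (simp add: divide_right_mono)
    then show ?thesis using pa pb by (simp add: sums_iff)
  qed
  define A where "A n = (norm (a n))^2" for n
  define B where "B n = (norm (b n))^2" for n
  define u where "u n = k^2 * A n - B n" for n
  define M where "M = R^2"
  define c1 where "c1 n = of_nat n * u n" for n
  have M0: "M > 0" using R0 by (simp add: M_def)
  have sq: "0 \<le> sqrt x" "sqrt x < R" if "0 \<le> x" "x < M" for x
  proof -
    show "0 \<le> sqrt x" using that by simp
    have "sqrt x < sqrt (R^2)" using that by (simp only: real_sqrt_less_iff M_def)
    then show "sqrt x < R" using R0 by simp
  qed
  have sqp: "sqrt x ^ (2*n) = x^n" if "0 \<le> x" for x :: real and n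
    using that by (simp add: power_mult)
  have smA0: "summable (\<lambda>n. A n * x^n)" if "0 \<le> x" "x < M" for x
    using conjunct1[OF par[OF sa sq[OF that]]] sums_summable
    by (simp add: A_def sqp[OF that(1)])
  have smB0: "summable (\<lambda>n. B n * x^n)" if "0 \<le> x" "x < M" for x
    using conjunct1[OF par[OF sb sq[OF that]]] sums_summable
    by (simp add: B_def sqp[OF that(1)])
  have smA: "summable (\<lambda>n. A n * x^n)" if "\<bar>x\<bar> < M" for x
    by (rule sm_all[OF smA0 that])
  have smB: "summable (\<lambda>n. B n * x^n)" if "\<bar>x\<bar> < M" for x
    by (rule sm_all[OF smB0 that])
  have smu: "summable (\<lambda>n. u n * x^n)" if "\<bar>x\<bar> < M" for x
  proof -
    have "summable (\<lambda>n. k^2 * (A n * x^n) - B n * x^n)"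
      by (intro summable_diff summable_mult smA smB that)
    then show ?thesis by (simp add: u_def algebra_simps)
  qed
  have smc1: "summable (\<lambda>n. c1 n * x^n)" if "\<bar>x\<bar> < M" for x
    using sm_n[OF smu that] by (simp add: c1_def)
  have nd: "(norm (diffs c n))^2 * sqrt x^(2*n) = (of_nat (Suc n))^2 * (norm (c (Suc n)))^2 * x^n"
    if "0 \<le> x" for c :: "nat \<Rightarrow> complex" and x n
    using that by (simp add: diffs_def norm_mult power_mult_distrib sqp del: of_nat_Suc)
  have d1: "0 \<le> (\<Sum>n. diffs c1 n * x^n)" if x: "0 \<le> x" "x < M" for x
  proof -
    have I: "summable (\<lambda>n. (of_nat (Suc n))^2 * A (Suc n) * x^n)"
      "summable (\<lambda>n. (of_nat (Suc n))^2 * B (Suc n) * x^n)"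
      "(\<Sum>n. (of_nat (Suc n))^2 * B (Suc n) * x^n) \<le> k^2 * (\<Sum>n. (of_nat (Suc n))^2 * A (Suc n) * x^n)"
      using ineq[OF sq[OF x]] by (simp_all add: nd[OF x(1)] A_def B_def)
    have "(\<Sum>n. diffs c1 n * x^n) = (\<Sum>n. k^2 * ((of_nat (Suc n))^2 * A (Suc n) * x^n) - (of_nat (Suc n))^2 * B (Suc n) * x^n)"
      by (simp add: diffs_def c1_def u_def algebra_simps power2_eq_square del: of_nat_Suc)
    also have "\<dots> = k^2 * (\<Sum>n. (of_nat (Suc n))^2 * A (Suc n) * x^n) - (\<Sum>n. (of_nat (Suc n))^2 * B (Suc n) * x^n)"
      using I by (simp add: suminf_diff[symmetric] summable_mult suminf_mult)
    finally show ?thesis using I by simp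
  qed
  have d2: "0 \<le> (\<Sum>n. c1 n * x^n)" if x: "0 \<le> x" "x < M" for x
    using pos_int[of M c1 x] smc1 d1 x by (simp add: c1_def)
  have d3: "0 \<le> (\<Sum>n. diffs u n * x^n)" if x: "0 \<le> x" "x < M" for x
  proof (cases "x = 0")
    case True
    then show ?thesis using d1[of 0] M0 by (simp add: diffs_def c1_def)
  next
    case False
    have sdu: "summable (\<lambda>n. diffs u n * x^n)"
      by (rule termdiff_converges[of x M]) (use x smu in auto)
    have "(\<Sum>n. diffs u n * x^n) * x = (\<Sum>n. diffs u n * x^n * x)"
      by (rule suminf_mult2[OF sdu])
    also have "\<dots> = (\<Sum>n. c1 (Suc n) * x^(Suc n))"
      by (simp add: diffs_def c1_def mult_ac)
    also have "\<dots> = (\<Sum>n. c1 n * x^n) - c1 0 * x^0"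
      by (rule suminf_split_head[OF smc1]) (use x in auto)
    finally have "0 \<le> (\<Sum>n. diffs u n * x^n) * x" using d2[OF x] by (simp add: c1_def)
    then show ?thesis using x False by (simp add: zero_le_mult_iff)
  qed
  have d4: "0 \<le> (\<Sum>n. u (Suc n) * x^(Suc n))" if x: "0 \<le> x" "x < M" for x
  proof -
    have "u 0 \<le> (\<Sum>n. u n * x^n)"
      using pos_int[of M u x] smu d3 x by simp
    moreover have "(\<Sum>n. u (Suc n) * x^(Suc n)) = (\<Sum>n. u n * x^n) - u 0 * x^0"
      by (rule suminf_split_head[OF smu]) (use x in auto)
    ultimately show ?thesis by simp
  qed
  have d5: "0 \<le> (\<Sum>n. c1 (Suc n) * x^(Suc n))" if x: "0 \<le> x" "x < M" for x
  proof -
    have "(\<Sum>n. c1 (Suc n) * x^(Suc n)) = (\<Sum>n. c1 n * x^n) - c1 0 * x^0"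
      by (rule suminf_split_head[OF smc1]) (use x in auto)
    then show ?thesis using d2[OF x] by (simp add: c1_def)
  qed
  define x1 where "x1 = \<rho>^2 / (1 - \<gamma>)^2"
  define x2 where "x2 = \<rho> / (1 - \<gamma>)^2"
  have g1: "(1 - \<gamma>)^2 > 0" using assms(2) by simp
  have MM: "M = 1 / (1 - \<gamma>)^2" by (simp add: M_def R_def power_divide)
  have x1: "0 \<le> x1" "x1 < M"
  proof -
    show "0 \<le> x1" by (simp add: x1_def)
    have "\<rho>^2 < 1" using assms(11,12) by (simp add: power_less_one_iff abs_square_less_1)
    then show "x1 < M" unfolding x1_def MM using g1 by (simp add: divide_strict_right_mono)
  qed
  have x2: "0 \<le> x2" "x2 < M"
  proof -
    show "0 \<le> x2" using assms(11) by (simp add: x2_def)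
    show "x2 < M" unfolding x2_def MM using g1 assms(12) by (simp add: divide_strict_right_mono)
  qed
  have ax1: "\<bar>x1\<bar> < M" "\<bar>x2\<bar> < M" using x1 x2 by auto
  have e1: "real (Suc n) * norm (c (Suc n))^2 / (1 - \<gamma>)^(2 * Suc n) * \<rho>^(2 * Suc n)
        = (of_nat (Suc n) * (norm (c (Suc n)))^2) * x1^(Suc n)" for c :: "nat \<Rightarrow> complex" and n
    by (simp add: x1_def power_divide power_mult[symmetric] del: of_nat_Suc power_Suc)
  have e2: "norm (c (Suc n))^2 / (1 - \<gamma>)^(2 * Suc n) * \<rho>^(Suc n)
        = (norm (c (Suc n)))^2 * x2^(Suc n)" for c :: "nat \<Rightarrow> complex" and n
    by (simp add: x2_def power_divide power_mult[symmetric] del: of_nat_Suc power_Suc)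
  have s1a: "summable (\<lambda>n. (of_nat (Suc n) * A (Suc n)) * x1^(Suc n))"
    using sm_n[OF smA ax1(1)] by (subst summable_Suc_iff)
  have s1b: "summable (\<lambda>n. (of_nat (Suc n) * B (Suc n)) * x1^(Suc n))"
    using sm_n[OF smB ax1(1)] by (subst summable_Suc_iff)
  have s2a: "summable (\<lambda>n. A (Suc n) * x2^(Suc n))"
    using smA[OF ax1(2)] by (subst summable_Suc_iff)
  have s2b: "summable (\<lambda>n. B (Suc n) * x2^(Suc n))"
    using smB[OF ax1(2)] by (subst summable_Suc_iff)
  have i1: "(\<Sum>n. (of_nat (Suc n) * B (Suc n)) * x1^(Suc n)) \<le> k^2 * (\<Sum>n. (of_nat (Suc n) * A (Suc n)) * x1^(Suc n))"
  proof (rule fin_ineq[OF s1a s1b])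
    show "0 \<le> (\<Sum>n. k^2 * ((of_nat (Suc n) * A (Suc n)) * x1^(Suc n)) - (of_nat (Suc n) * B (Suc n)) * x1^(Suc n))"
      using d5[OF x1] by (simp add: c1_def u_def algebra_simps del: of_nat_Suc)
  qed
  have i2: "(\<Sum>n. B (Suc n) * x2^(Suc n)) \<le> k^2 * (\<Sum>n. A (Suc n) * x2^(Suc n))"
  proof (rule fin_ineq[OF s2a s2b])
    show "0 \<le> (\<Sum>n. k^2 * (A (Suc n) * x2^(Suc n)) - B (Suc n) * x2^(Suc n))"
      using d4[OF x2] by (simp add: u_def algebra_simps del: of_nat_Suc)
  qed
  show ?thesis
    unfolding e1 e2 using s1a s1b s2a s2b i1 i2 by (simp add: A_def B_def del: of_nat_Suc)
qed

end
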